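(* For every integer $n$ with $1\le n\le N$ and every $\delta\in(0,1]$, with probability at least $1-\delta$, \[ \frac{\sum_{t=1}^n (X_t-\mu)}{n}\le (b-a)\sqrt{\frac{\rho_n\log(1/\delta)}{2n}}. \]
   Context: Let $N\ge 2$ and let $\mathcal X=(x_1,\dots,x_N)$ be a finite population of real numbers (repetitions allowed). Let $(X_1,\dots,X_N)=(x_{\pi(1)},\dots,x_{\pi(N)})$, where $\pi$ is a uniformly random permutation of $\{1,\dots,N\}$. For $n\le N$, $(X_1,\dots,X_n)$ is therefore a sample of size $n$ drawn uniformly without replacement from $\mathcal X$. Let $\mu=\frac1N\sum_{i=1}^N x_i$, $a=\min_i x_i$ and $b=\max_i x_i$. Define \[ \rho_n=\begin{cases}1-\frac{n-1}{N} & \text{if } n\le N/2,\\[2pt] \big(1-\frac nN\big)(1+1/n) & \text{if } n>N/2.\end{cases} \] *)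

theory Defs
  imports "HOL-Probability.Probability"
begin

definition rho :: "nat \<Rightarrow> nat \<Rightarrow> real" where
  "rho N n = (if real n \<le> real N / 2 then 1 - (real n - 1) / real N
              else (1 - real n / real N) * (1 + 1 / real n))"

definition unif_perm :: "nat \<Rightarrow> (nat \<Rightarrow> nat) pmf" where
  "unif_perm N = pmf_of_set {\<pi>. \<pi> permutes {1..N}}"

end

theory Submission
  imports Defs "HOL-Combinatorics.Multiset_Permutations"
begin

lemma hoeff_finite:
  fixes x :: "'a \<Rightarrow> real"
  assumes fin: "finite A" and ne: "A \<noteq> {}" and bnd: "\<And>i. i \<in> A \<Longrightarrow> a \<le> x i \<and> x i \<le> b"
    and l: "l > 0"
  shows "(\<Sum>i\<in>A. exp (l * (x i - (\<Sum>j\<in>A. x j) / card A))) \<le> card A * exp (l\<^sup>2 * (b - a)\<^sup>2 / 8)"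
proof -
  let ?M = "measure_pmf (pmf_of_set A)"
  interpret interval_bounded_random_variable ?M x a b
    by unfold_locales (use fin ne bnd in \<open>auto simp: AE_measure_pmf_iff\<close>)
  have E: "integral\<^sup>L ?M x = (\<Sum>j\<in>A. x j) / card A"
    by (rule integral_pmf_of_set[OF ne fin])
  have "nn_integral ?M (\<lambda>y. exp (l * (x y - integral\<^sup>L ?M x))) \<le> ennreal (exp (l\<^sup>2 * (b - a)\<^sup>2 / 8))"
    by (rule Hoeffdings_lemma_nn_integral[OF l])
  also have "nn_integral ?M (\<lambda>y. exp (l * (x y - integral\<^sup>L ?M x)))
     = ennreal ((\<Sum>i\<in>A. exp (l * (x i - (\<Sum>j\<in>A. x j) / card A))) / card A)"
    using fin ne by (simp add: nn_integral_pmf_of_set[OF ne fin] E ennreal_of_nat_eq_real_of_nat)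
       (rule divide_ennreal, auto intro!: sum_nonneg simp: card_gt_0_iff)
  finally have "(\<Sum>i\<in>A. exp (l * (x i - (\<Sum>j\<in>A. x j) / card A))) / card A \<le> exp (l\<^sup>2 * (b - a)\<^sup>2 / 8)"
    by (subst (asm) ennreal_le_iff) auto
  moreover have "card A > 0" using fin ne by (simp add: card_gt_0_iff)
  ultimately show ?thesis by (simp add: divide_le_eq mult.commute)
qed

definition muA :: "('a \<Rightarrow> real) \<Rightarrow> 'a set \<Rightarrow> real" where
  "muA x A = (\<Sum>j\<in>A. x j) / card A"

definition YA :: "('a \<Rightarrow> real) \<Rightarrow> 'a set \<Rightarrow> nat \<Rightarrow> 'a list \<Rightarrow> real" where
  "YA x A k s = sum_list (map x (take k s)) - real k * muA x A"

lemma sum_perms: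
  assumes "finite A" "A \<noteq> {}"
  shows "(\<Sum>s\<in>permutations_of_set A. f s) = (\<Sum>y\<in>A. \<Sum>s\<in>permutations_of_set (A - {y}). f (y # s))"
proof -
  have "(\<Sum>s\<in>permutations_of_set A. f s) = (\<Sum>s\<in>(\<Union>y\<in>A. (\<lambda>xs. y # xs) ` permutations_of_set (A - {y})). f s)"
    using assms(2) by (subst permutations_of_set_nonempty) auto
  also have "\<dots> = (\<Sum>y\<in>A. \<Sum>s\<in>(\<lambda>xs. y # xs) ` permutations_of_set (A - {y}). f s)"
    by (rule sum.UNION_disjoint) (use assms(1) in auto)
  also have "\<dots> = (\<Sum>y\<in>A. \<Sum>s\<in>permutations_of_set (A - {y}). f (y # s))"
  proof (rule sum.cong[OF refl])
    fix y assume "y \<in> A"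
    show "sum f ((#) y ` permutations_of_set (A - {y})) = (\<Sum>s\<in>permutations_of_set (A - {y}). f (y # s))"
      by (subst sum.reindex) (auto simp: inj_on_def o_def)
  qed
  finally show ?thesis .
qed

lemma key_alg: "(M::real) - 1 > 0 \<Longrightarrow> M - 1 - k > 0 \<Longrightarrow>
  l * (xy + s0 - (k + 1) * \<mu>) / (M - (k + 1)) = l / (M - 1) * (xy - \<mu>) + l * (s0 - k * ((M * \<mu> - xy) / (M - 1))) / (M - 1 - k)"
proof -
  assume a: "M - 1 > 0" "M - 1 - k > 0"
  define D where "D = M - 1 - k"
  define E where "E = M - 1"
  have M: "M = E + 1" "k = E - D" by (simp_all add: D_def E_def)
  have "D > 0" "E > 0" using a by (simp_all add: D_def E_def)
  then show ?thesis unfolding M D_def[symmetric] E_def[symmetric]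
    by (simp add: field_simps)
qed

lemma core:
  fixes x :: "'a \<Rightarrow> real"
  assumes l: "l > 0"
  shows "finite A \<Longrightarrow> card A > k \<Longrightarrow> (\<forall>i\<in>A. a \<le> x i \<and> x i \<le> b) \<Longrightarrow>
    (\<Sum>s\<in>permutations_of_set A. exp (l * YA x A k s / (real (card A) - real k)))
    \<le> fact (card A) * exp (l\<^sup>2 * (b - a)\<^sup>2 / 8 * (\<Sum>j\<in>{card A - k..<card A}. 1 / (real j)\<^sup>2))"
proof (induction k arbitrary: A)
  case 0
  then show ?case by (simp add: YA_def)
next
  case (Suc k)
  define M where "M = card A"
  have fin: "finite A" and Mk: "M > Suc k" and bnd: "\<forall>i\<in>A. a \<le> x i \<and> x i \<le> b"
    using Suc.prems by (auto simp: M_def)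
  have ne: "A \<noteq> {}" using Mk fin M_def by auto
  define c where "c = l\<^sup>2 * (b - a)\<^sup>2 / 8"
  define S' where "S' = (\<Sum>j\<in>{M - 1 - k..<M - 1}. 1 / (real j)\<^sup>2)"
  define \<mu> where "\<mu> = muA x A"
  have M1: "real M - 1 > 0" using Mk by simp
  have key: "l * YA x A (Suc k) (y # s) / (real M - real (Suc k))
        = l / (real M - 1) * (x y - \<mu>) + l * YA x (A - {y}) k s / (real (card (A - {y})) - real k)"
    if y: "y \<in> A" for y s
  proof -
    have cA: "card (A - {y}) = M - 1" using y fin M_def by simp
    have sA: "(\<Sum>j\<in>A - {y}. x j) = (\<Sum>j\<in>A. x j) - x y" using y fin by (simp add: sum_diff1)
    have muA': "muA x (A - {y}) = (real M * \<mu> - x y) / (real M - 1)"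
      using Mk by (simp add: muA_def \<mu>_def cA sA M_def of_nat_diff)
    have d1: "real M - 1 - real k > 0" using Mk by simp
    show ?thesis
      unfolding YA_def muA' cA using key_alg[OF M1 d1, of l "x y" "sum_list (map x (take k s))" \<mu>] Mk
      by (simp add: of_nat_diff \<mu>_def[symmetric] add.commute)
  qed
  have IH: "(\<Sum>s\<in>permutations_of_set (A - {y}). exp (l * YA x (A - {y}) k s / (real (card (A - {y})) - real k)))
      \<le> fact (M - 1) * exp (c * S')" if y: "y \<in> A" for y
  proof -
    have cA: "card (A - {y}) = M - 1" using y fin M_def by simp
    have "(\<Sum>s\<in>permutations_of_set (A - {y}). exp (l * YA x (A - {y}) k s / (real (card (A - {y})) - real k)))
      \<le> fact (card (A - {y})) * exp (l\<^sup>2 * (b - a)\<^sup>2 / 8 * (\<Sum>j\<in>{card (A - {y}) - k..<card (A - {y})}. 1 / (real j)\<^sup>2))"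
      by (rule Suc.IH) (use fin bnd cA Mk in auto)
    then show ?thesis by (simp add: cA c_def S'_def)
  qed
  have "(\<Sum>s\<in>permutations_of_set A. exp (l * YA x A (Suc k) s / (real (card A) - real (Suc k))))
      = (\<Sum>y\<in>A. exp (l / (real M - 1) * (x y - \<mu>)) *
           (\<Sum>s\<in>permutations_of_set (A - {y}). exp (l * YA x (A - {y}) k s / (real (card (A - {y})) - real k))))"
  proof (subst sum_perms[OF fin ne], rule sum.cong[OF refl])
    fix y assume y: "y \<in> A"
    have e: "exp (l * YA x A (Suc k) (y # s) / (real (card A) - real (Suc k))) =
      exp (l / (real M - 1) * (x y - \<mu>)) * exp (l * YA x (A - {y}) k s / (real (card (A - {y})) - real k))" for s
      unfolding M_def[symmetric] key[OF y] by (rule exp_add)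
    show "(\<Sum>s\<in>permutations_of_set (A - {y}). exp (l * YA x A (Suc k) (y # s) / (real (card A) - real (Suc k)))) =
      exp (l / (real M - 1) * (x y - \<mu>)) * (\<Sum>s\<in>permutations_of_set (A - {y}). exp (l * YA x (A - {y}) k s / (real (card (A - {y})) - real k)))"
      unfolding e by (rule sum_distrib_left[symmetric])
  qed
  also have "\<dots> \<le> (\<Sum>y\<in>A. exp (l / (real M - 1) * (x y - \<mu>)) * (fact (M - 1) * exp (c * S')))"
    by (intro sum_mono mult_left_mono IH) auto
  also have "\<dots> = (\<Sum>y\<in>A. exp (l / (real M - 1) * (x y - \<mu>))) * (fact (M - 1) * exp (c * S'))"
    by (simp add: sum_distrib_right)
  also have "\<dots> \<le> (real M * exp ((l / (real M - 1))\<^sup>2 * (b - a)\<^sup>2 / 8)) * (fact (M - 1) * exp (c * S'))"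
  proof (intro mult_right_mono)
    show "(\<Sum>y\<in>A. exp (l / (real M - 1) * (x y - \<mu>))) \<le> real M * exp ((l / (real M - 1))\<^sup>2 * (b - a)\<^sup>2 / 8)"
      using hoeff_finite[OF fin ne, of a x b "l / (real M - 1)"] bnd l M1
      by (simp add: \<mu>_def muA_def M_def)
  qed auto
  also have "\<dots> = fact M * exp (c * (S' + 1 / (real (M - 1))\<^sup>2))"
  proof -
    have "fact M = real M * fact (M - 1)" using Mk by (cases M) auto
    moreover have "(l / (real M - 1))\<^sup>2 * (b - a)\<^sup>2 / 8 = c * (1 / (real (M - 1))\<^sup>2)"
      using Mk by (simp add: c_def of_nat_diff power_divide)
    ultimately show ?thesis by (simp add: distrib_left exp_add)
  qed
  also have "S' + 1 / (real (M - 1))\<^sup>2 = (\<Sum>j\<in>{M - Suc k..<M}. 1 / (real j)\<^sup>2)"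
  proof -
    have "{M - Suc k..<M} = insert (M - 1) {M - 1 - k..<M - 1}" using Mk by auto
    then show ?thesis by (simp add: S'_def)
  qed
  finally show ?case by (simp add: M_def c_def)
qed

lemma alg2: "(q::real) > 0 \<Longrightarrow> p > 0 \<Longrightarrow> (q + 1 - p) * (p + 1) / ((q + 1) * p\<^sup>2) - ((q - p) * (p + 1) / (q * p\<^sup>2) + 1 / q\<^sup>2)
             = (q - p) / (q\<^sup>2 * (q + 1) * p)"
proof -
  assume a: "q > 0" "p > 0"
  define r where "r = q + 1"
  have r: "r > 0" "q = r - 1" using a by (auto simp: r_def)
  show ?thesis unfolding r_def[symmetric] using r a
    by (simp add: field_simps power2_eq_square) (simp add: r_def algebra_simps)
qed

lemma sumbound:
  assumes "1 \<le> m" "m \<le> M"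
  shows "(\<Sum>j\<in>{m..<M}. 1 / (real j)\<^sup>2) \<le> real (M - m) * (real m + 1) / (real M * (real m)\<^sup>2)"
  using assms(2)
proof (induction M rule: dec_induct)
  case base
  then show ?case by simp
next
  case (step M)
  have "(\<Sum>j\<in>{m..<Suc M}. 1 / (real j)\<^sup>2) = (\<Sum>j\<in>{m..<M}. 1 / (real j)\<^sup>2) + 1 / (real M)\<^sup>2"
    using step.hyps by simp
  also have "\<dots> \<le> real (M - m) * (real m + 1) / (real M * (real m)\<^sup>2) + 1 / (real M)\<^sup>2"
    using step.IH by simp
  also have "\<dots> \<le> real (Suc M - m) * (real m + 1) / (real (Suc M) * (real m)\<^sup>2)"
  proof -
    have m0: "real m \<ge> 1" "real M \<ge> real m" using assms step.hyps by auto
    have "real (M - m) = real M - real m" "real (Suc M - m) = real M + 1 - real m" using step.hyps by auto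
    moreover have "(real M - real m) * (real m + 1) / (real M * (real m)\<^sup>2) + 1 / (real M)\<^sup>2
       \<le> (real M + 1 - real m) * (real m + 1) / ((real M + 1) * (real m)\<^sup>2)"
    proof -
      define p where "p = real m" define q where "q = real M"
      have p: "p \<ge> 1" "q \<ge> p" using m0 by (auto simp: p_def q_def)
      have "(q - p) * (p + 1) / (q * p\<^sup>2) + 1 / q\<^sup>2 \<le> (q + 1 - p) * (p + 1) / ((q + 1) * p\<^sup>2)"
      proof -
        have pos: "q > 0" "p > 0" "q + 1 > 0" using p by auto
        have "(q + 1 - p) * (p + 1) / ((q + 1) * p\<^sup>2) - ((q - p) * (p + 1) / (q * p\<^sup>2) + 1 / q\<^sup>2)
             = (q - p) / (q\<^sup>2 * (q + 1) * p)"
          using pos(1,2) by (rule alg2)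
        moreover have "(q - p) / (q\<^sup>2 * (q + 1) * p) \<ge> 0" using p pos by simp
        ultimately show ?thesis by linarith
      qed
      then show ?thesis by (simp add: p_def q_def)
    qed
    ultimately show ?thesis by (simp add: add.commute)
  qed
  finally show ?case .
qed

lemma chernoff:
  fixes x :: "'a \<Rightarrow> real"
  assumes fin: "finite A" and k: "1 \<le> k" "k < card A" and ab: "a < b"
    and bnd: "\<forall>i\<in>A. a \<le> x i \<and> x i \<le> b" and s: "s > 0"
  shows "real (card {\<sigma>\<in>permutations_of_set A. YA x A k \<sigma> > s})
     \<le> fact (card A) * exp (- (2 * s\<^sup>2 * real (card A) / ((b - a)\<^sup>2 * real k * (real (card A) - real k + 1))))"
proof -
  define M where "M = card A"
  define D where "D = real M - real k"
  define S where "S = (\<Sum>j\<in>{M - k..<M}. 1 / (real j)\<^sup>2)"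
  define t where "t = s / D"
  define w where "w = (b - a)\<^sup>2"
  define l where "l = 4 * t / (w * S)"
  define B where "B = {\<sigma>\<in>permutations_of_set A. YA x A k \<sigma> > s}"
  define L where "L = permutations_of_set A"
  have D: "D > 0" using k by (simp add: D_def M_def)
  have w: "w > 0" using ab by (simp add: w_def)
  have S: "S > 0" unfolding S_def
    by (rule sum_pos) (use k M_def in auto)
  have Sb: "S \<le> real k * (D + 1) / (real M * D\<^sup>2)"
  proof -
    have "S \<le> real (M - (M - k)) * (real (M - k) + 1) / (real M * (real (M - k))\<^sup>2)"
      unfolding S_def by (rule sumbound) (use k M_def in auto)
    moreover have "real (M - k) = D" using k by (simp add: D_def M_def of_nat_diff)
    moreover have "M - (M - k) = k" using k M_def by simp
    ultimately show ?thesis by simp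
  qed
  have t: "t > 0" using s D by (simp add: t_def)
  have l: "l > 0" using t w S by (simp add: l_def)
  have "real (card B) * exp (l * t) = (\<Sum>\<sigma>\<in>B. exp (l * t))" by simp
  also have "\<dots> \<le> (\<Sum>\<sigma>\<in>B. exp (l * YA x A k \<sigma> / (real (card A) - real k)))"
  proof (rule sum_mono)
    fix \<sigma> assume "\<sigma> \<in> B"
    then have "YA x A k \<sigma> > s" by (simp add: B_def)
    then have "t \<le> YA x A k \<sigma> / D" using D by (simp add: t_def divide_right_mono)
    then have "l * t \<le> l * (YA x A k \<sigma> / D)" using l by (intro mult_left_mono) auto
    then show "exp (l * t) \<le> exp (l * YA x A k \<sigma> / (real (card A) - real k))"
      by (simp add: D_def M_def)
  qed
  also have "\<dots> \<le> (\<Sum>\<sigma>\<in>L. exp (l * YA x A k \<sigma> / (real (card A) - real k)))"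
    by (rule sum_mono2) (auto simp: B_def L_def)
  also have "\<dots> \<le> fact M * exp (l\<^sup>2 * w / 8 * S)"
    using core[OF l fin k(2) bnd] by (simp add: L_def M_def S_def w_def)
  finally have "real (card B) \<le> fact M * exp (l\<^sup>2 * w / 8 * S - l * t)"
    by (simp add: exp_diff pos_le_divide_eq)
  also have "l\<^sup>2 * w / 8 * S - l * t = - (2 * t\<^sup>2 / (w * S))"
    using w S by (simp add: l_def power2_eq_square field_simps)
  also have "- (2 * t\<^sup>2 / (w * S)) \<le> - (2 * s\<^sup>2 * real M / (w * real k * (D + 1)))"
  proof -
    have "2 * s\<^sup>2 * real M / (w * real k * (D + 1)) \<le> 2 * t\<^sup>2 / (w * S)"
    proof -
      have "2 * t\<^sup>2 / (w * S) = 2 * s\<^sup>2 / (w * (D\<^sup>2 * S))"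
        using D by (simp add: t_def power_divide field_simps)
      also have "\<dots> \<ge> 2 * s\<^sup>2 / (w * (real k * (D + 1) / real M))"
      proof (rule divide_left_mono)
        show "w * (D\<^sup>2 * S) \<le> w * (real k * (D + 1) / real M)"
          using Sb D w M_def k by (intro mult_left_mono) (auto simp: field_simps)
        show "0 < w * (real k * (D + 1) / real M) * (w * (D\<^sup>2 * S))"
          using w S D k M_def by (intro mult_pos_pos) auto
      qed simp
      also have "2 * s\<^sup>2 / (w * (real k * (D + 1) / real M)) = 2 * s\<^sup>2 * real M / (w * real k * (D + 1))"
        using k M_def by (simp add: field_simps)
      finally show ?thesis .
    qed
    then show ?thesis by simp
  qed
  finally have "real (card B) \<le> fact M * exp (- (2 * s\<^sup>2 * real M / (w * real k * (D + 1))))"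
    by (simp add: mult_left_mono)
  then show ?thesis by (simp add: B_def M_def w_def D_def)
qed

lemma bij_perm_list:
  "bij_betw (\<lambda>\<pi>. map \<pi> [1..<N+1]) {\<pi>. \<pi> permutes {1..N}} (permutations_of_set {1..N})"
proof (rule bij_betwI')
  fix p q assume p: "p \<in> {\<pi>. \<pi> permutes {1..N}}" and q: "q \<in> {\<pi>. \<pi> permutes {1..N}}"
  show "(map p [1..<N+1] = map q [1..<N+1]) = (p = q)"
  proof
    assume h: "map p [1..<N+1] = map q [1..<N+1]"
    show "p = q"
    proof
      fix i
      show "p i = q i"
      proof (cases "i \<in> {1..N}")
        case True
        then have i: "i \<in> set [1..<N+1]" by auto
        have "\<forall>j\<in>set [1..<N+1]. p j = q j" using h[unfolded map_eq_conv] .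
        then show ?thesis using i by blast
      next
        case False
        then show ?thesis using p q by (simp add: permutes_not_in)
      qed
    qed
  qed simp
next
  fix p assume p: "p \<in> {\<pi>. \<pi> permutes {1..N}}"
  then have pp: "p permutes {1..N}" by simp
  show "map p [1..<N+1] \<in> permutations_of_set {1..N}"
  proof (rule permutations_of_setI)
    have h: "{1..<N+1} = {1..N}" by auto
    show "set (map p [1..<N+1]) = {1..N}"
      unfolding set_map set_upt h by (rule permutes_image[OF pp])
    show "distinct (map p [1..<N+1])"
      using permutes_inj_on[OF pp] by (simp add: distinct_map inj_on_subset)
  qed
next
  fix s assume s: "s \<in> permutations_of_set {1..N}"
  have ss: "set s = {1..N}" "distinct s" using permutations_of_setD[OF s] by auto
  have len: "length s = N" using ss distinct_card[OF ss(2)] by simp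
  define p where "p i = (if i \<in> {1..N} then s ! (i - 1) else i)" for i
  have pb: "bij_betw p {1..N} {1..N}"
  proof (rule bij_betw_imageI)
    show "inj_on p {1..N}"
    proof (rule inj_onI)
      fix i j assume i: "i \<in> {1..N}" and j: "j \<in> {1..N}" and e: "p i = p j"
      then have "s ! (i - 1) = s ! (j - 1)" by (simp add: p_def)
      moreover have "i - 1 < length s" "j - 1 < length s" using i j len by auto
      ultimately have "i - 1 = j - 1" using ss(2) nth_eq_iff_index_eq by blast
      then show "i = j" using i j by auto
    qed
    show "p ` {1..N} = {1..N}"
    proof
      show "p ` {1..N} \<subseteq> {1..N}"
      proof
        fix y assume "y \<in> p ` {1..N}"
        then obtain i where i: "i \<in> {1..N}" "y = p i" by blast
        then have "y = s ! (i - 1)" by (simp add: p_def)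
        moreover have "i - 1 < length s" using i len by auto
        ultimately have "y \<in> set s" by simp
        then show "y \<in> {1..N}" using ss(1) by simp
      qed
      show "{1..N} \<subseteq> p ` {1..N}"
      proof
        fix j assume "j \<in> {1..N}"
        then have "j \<in> set s" using ss(1) by simp
        then obtain i where i: "i < N" "s ! i = j" using len by (auto simp: in_set_conv_nth)
        then have "p (i + 1) = j" by (simp add: p_def)
        moreover have "i + 1 \<in> {1..N}" using i by auto
        ultimately show "j \<in> p ` {1..N}" by (metis image_eqI)
      qed
    qed
  qed
  have "p permutes {1..N}" by (rule bij_imp_permutes[OF pb]) (auto simp: p_def)
  moreover have "s = map p [1..<N+1]"
  proof (rule nth_equalityI)
    show "length s = length (map p [1..<N+1])" using len by simp
    fix i assume i: "i < length s"
    have "[1..<N+1] ! i = 1 + i" using i len by (intro nth_upt) simp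
    moreover have "i < length [1..<N+1]" using i len by simp
    ultimately have "map p [1..<N+1] ! i = p (1 + i)" by (metis nth_map)
    also have "\<dots> = s ! i" using i len by (simp add: p_def)
    finally show "s ! i = map p [1..<N+1] ! i" by simp
  qed
  ultimately show "\<exists>p\<in>{\<pi>. \<pi> permutes {1..N}}. s = map p [1..<N+1]" by blast
qed

lemma dev_eq:
  assumes "n \<le> N"
  shows "(\<Sum>t=1..n. x (\<pi> t) - muA x {1..N}) = YA x {1..N} n (map \<pi> [1..<N+1])"
proof -
  have t: "take n [1..<N+1] = [1..<1+n]" by (rule take_upt) (use assms in simp)
  have tk: "take n (map \<pi> [1..<N+1]) = map \<pi> [1..<n+1]"
    unfolding take_map t by simp
  have h: "{1..<n+1} = {1..n}" by auto
  have sl: "sum_list (map x (map \<pi> [1..<n+1])) = (\<Sum>t=1..n. x (\<pi> t))"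
    by (simp only: map_map interv_sum_list_conv_sum_set_nat set_upt h o_def)
  show ?thesis
    unfolding YA_def tk sl by (simp add: sum_subtractf)
qed

lemma rev_eq:
  assumes s: "s \<in> permutations_of_set A" and n: "n \<le> card A" and fin: "finite A" and ne: "A \<noteq> {}"
  shows "YA x A n s = YA (\<lambda>i. - x i) A (card A - n) (rev s)"
proof -
  have ss: "set s = A" "distinct s" using permutations_of_setD[OF s] by auto
  have len: "length s = card A" using ss distinct_card[OF ss(2)] by simp
  have tot: "sum_list (map x s) = real (card A) * muA x A"
    using ss fin ne by (simp add: sum_list_distinct_conv_sum_set muA_def card_gt_0_iff)
  have split: "sum_list (map x (take n s)) + sum_list (map x (drop n s)) = sum_list (map x s)"
    by (metis append_take_drop_id map_append sum_list_append)
  have tr: "take (card A - n) (rev s) = rev (drop n s)"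
    using n len by (simp add: take_rev)
  have mu: "muA (\<lambda>i. - x i) A = - muA x A" by (simp add: muA_def sum_negf)
  have neg: "sum_list (map (\<lambda>i. - x i) l) = - sum_list (map x l)" for l by (induct l) auto
  have r: "sum_list (map (\<lambda>i. - x i) (rev (drop n s))) = - sum_list (map x (drop n s))"
    by (simp only: rev_map[symmetric] sum_list_rev neg)
  have c: "real (card A - n) = real (card A) - real n" using n by (simp add: of_nat_diff)
  have "YA (\<lambda>i. - x i) A (card A - n) (rev s) = - sum_list (map x (drop n s)) + (real (card A) - real n) * muA x A"
    unfolding YA_def tr mu r c by simp
  also have "\<dots> = YA x A n s"
    unfolding YA_def using split tot by (simp add: left_diff_distrib)
  finally show ?thesis by simp
qed

lemma al1: "(n::real) > 0 \<Longrightarrow> N > 0 \<Longrightarrow> w > 0 \<Longrightarrow> D > 0 \<Longrightarrow>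
  2 * (n\<^sup>2 * w * (D / N * Ls / (2 * n))) * N / (w * n * D) = Ls"
  by (simp add: field_simps power2_eq_square)
lemma al2: "(n::real) > 0 \<Longrightarrow> N > 0 \<Longrightarrow> w > 0 \<Longrightarrow> D > 0 \<Longrightarrow> E > 0 \<Longrightarrow>
  2 * (n\<^sup>2 * w * (D * E / (N * n) * Ls / (2 * n))) * N / (w * D * E) = Ls"
  by (simp add: field_simps power2_eq_square)

lemma sum_list_const_on:
  assumes "\<forall>y\<in>set l. x y = (c::real)" shows "sum_list (map x l) = real (length l) * c"
  using assms by (induct l) (auto simp: algebra_simps)

lemma card_filter_image:
  assumes "bij_betw f P L"
  shows "card {p\<in>P. Q (f p)} = card {s\<in>L. Q s}"
proof -
  have "f ` {p\<in>P. Q (f p)} = {s\<in>L. Q s}"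
    using assms by (auto simp: bij_betw_def)
  moreover have "inj_on f {p\<in>P. Q (f p)}"
    using assms by (auto simp: bij_betw_def intro: inj_on_subset)
  ultimately show ?thesis by (metis card_image)
qed

lemma card_filter_rev:
  "card {s\<in>permutations_of_set A. Q (rev s)} = card {s\<in>permutations_of_set A. Q s}"
proof -
  have "bij_betw rev (permutations_of_set A) (permutations_of_set A)"
    by (rule bij_betw_imageI) (auto simp: inj_on_def)
  then show ?thesis by (rule card_filter_image)
qed

theorem corollary1:
  fixes N n :: nat and x :: "nat \<Rightarrow> real" and \<delta> :: real
  assumes "N \<ge> 2"
    and "1 \<le> n" and "n \<le> N"
    and "0 < \<delta>" and "\<delta> \<le> 1"
  defines "\<mu> \<equiv> (\<Sum>i=1..N. x i) / real N"
    and "a \<equiv> Min (x ` {1..N})"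
    and "b \<equiv> Max (x ` {1..N})"
  shows "measure_pmf.prob (unif_perm N)
           {\<pi>. (\<Sum>t=1..n. x (\<pi> t) - \<mu>) / real n
                 \<le> (b - a) * sqrt (rho N n * ln (1 / \<delta>) / (2 * real n))}
         \<ge> 1 - \<delta>"
proof -
  note N = assms(1) and n = assms(2,3) and d = assms(4,5)
  define A where "A = {1..N}"
  define P where "P = {\<pi>. \<pi> permutes A}"
  define L where "L = permutations_of_set A"
  define f where "f = (\<lambda>\<pi>::nat\<Rightarrow>nat. map \<pi> [1..<N+1])"
  define Ls where "Ls = ln (1 / \<delta>)"
  define \<epsilon> where "\<epsilon> = (b - a) * sqrt (rho N n * Ls / (2 * real n))"
  define E where "E = {\<pi>. (\<Sum>t=1..n. x (\<pi> t) - \<mu>) / real n \<le> \<epsilon>}"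
  define Bn where "Bn = {\<sigma>\<in>L. YA x A n \<sigma> > real n * \<epsilon>}"
  have finA: "finite A" and cardA: "card A = N" and Ane: "A \<noteq> {}" using N by (auto simp: A_def)
  have mu: "\<mu> = muA x A" by (simp add: \<mu>_def muA_def A_def)
  have finP: "finite P" using finA by (simp add: P_def finite_permutations)
  have Pne: "P \<noteq> {}" using permutes_id[of A] unfolding P_def by blast
  have cardP: "card P = fact N" using card_permutations[OF cardA finA] by (simp add: P_def)
  have cardL: "card L = fact N" using finA cardA by (simp add: L_def)
  have bij: "bij_betw f P L" unfolding f_def P_def L_def A_def by (rule bij_perm_list)
  have bnd: "\<forall>i\<in>A. a \<le> x i \<and> x i \<le> b"
    using finA by (auto simp: a_def b_def A_def)
  have ab: "a \<le> b" using bnd Ane by fastforce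
  have Ls0: "Ls \<ge> 0" using d by (simp add: Ls_def)
  have expLs: "exp (- Ls) = \<delta>" using d by (simp add: Ls_def ln_div)
  have prob: "measure_pmf.prob (unif_perm N) E = card (P \<inter> E) / card P"
    unfolding unif_perm_def A_def[symmetric] P_def[symmetric] by (rule measure_pmf_of_set[OF Pne finP])
  have PE: "P - E = {\<pi>\<in>P. YA x A n (f \<pi>) > real n * \<epsilon>}"
  proof (rule set_eqI)
    fix \<pi>
    have e: "(\<Sum>t=1..n. x (\<pi> t) - \<mu>) = YA x A n (f \<pi>)"
      unfolding mu A_def f_def by (rule dev_eq[OF n(2)])
    have "\<pi> \<notin> E \<longleftrightarrow> YA x A n (f \<pi>) > real n * \<epsilon>"
      unfolding E_def mem_Collect_eq e using n by (simp add: pos_divide_le_eq not_le mult.commute)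
    then show "\<pi> \<in> P - E \<longleftrightarrow> \<pi> \<in> {\<pi>\<in>P. YA x A n (f \<pi>) > real n * \<epsilon>}" by blast
  qed
  have cPE: "card (P - E) = card Bn"
    unfolding PE Bn_def by (rule card_filter_image[OF bij])
  have split: "card P = card (P \<inter> E) + card (P - E)"
    using finP by (metis card_Int_Diff)
  have key: "real (card Bn) \<le> \<delta> * fact N"
  proof (cases "\<delta> = 1 \<or> a = b \<or> n = N")
    case True
    then consider "\<delta> = 1" | "a = b" | "n = N" by blast
    then show ?thesis
    proof cases
      case 1
      have "card Bn \<le> card L" by (rule card_mono) (auto simp: L_def Bn_def)
      then have "real (card Bn) \<le> real (card L)" by simp
      also have "real (card L) = fact N" using cardL by simp
      finally show ?thesis using 1 by simp
    next
      case 2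
      have xa: "\<forall>i\<in>A. x i = a" using bnd 2 by force
      have mua: "muA x A = a"
        using xa cardA N by (simp add: muA_def)
      have "Bn = {}"
      proof (rule ccontr)
        assume "Bn \<noteq> {}"
        then obtain \<sigma> where s: "\<sigma> \<in> L" "YA x A n \<sigma> > real n * \<epsilon>" by (auto simp: Bn_def)
        have sL: "\<sigma> \<in> permutations_of_set A" using s(1) by (simp add: L_def)
        have ss: "set \<sigma> = A" "length \<sigma> = N"
          using permutations_of_setD(1)[OF sL] length_finite_permutations_of_set[OF sL] cardA by auto
        have "\<forall>y\<in>set (take n \<sigma>). x y = a"
        proof
          fix y assume "y \<in> set (take n \<sigma>)"
          then have "y \<in> set \<sigma>" by (rule in_set_takeD)
          then show "x y = a" using xa ss(1) by blast
        qed
        then have "sum_list (map x (take n \<sigma>)) = real n * a"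
          using sum_list_const_on[of "take n \<sigma>" x a] ss n by simp
        then have "YA x A n \<sigma> = 0" by (simp add: YA_def mua)
        moreover have "\<epsilon> = 0" using 2 by (simp add: \<epsilon>_def)
        ultimately show False using s(2) by simp
      qed
      then show ?thesis using d by simp
    next
      case 3
      have "Bn = {}"
      proof (rule ccontr)
        assume "Bn \<noteq> {}"
        then obtain \<sigma> where s: "\<sigma> \<in> L" "YA x A n \<sigma> > real n * \<epsilon>" by (auto simp: Bn_def)
        have sL: "\<sigma> \<in> permutations_of_set A" using s(1) by (simp add: L_def)
        have ss: "set \<sigma> = A" "distinct \<sigma>" "length \<sigma> = N"
          using permutations_of_setD[OF sL] length_finite_permutations_of_set[OF sL] cardA by auto
        have "sum_list (map x \<sigma>) = sum x A" using ss by (simp add: sum_list_distinct_conv_sum_set)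
        then have "YA x A n \<sigma> = 0" using 3 ss N cardA by (simp add: YA_def muA_def)
        moreover have "rho N n = 0" using 3 N by (simp add: rho_def)
        then have "\<epsilon> = 0" by (simp add: \<epsilon>_def)
        ultimately show False using s(2) by simp
      qed
      then show ?thesis using d by simp
    qed
  next
    case False
    then have d1: "\<delta> < 1" and ab': "a < b" and nN: "n < N" using d ab n by auto
    have Ls: "Ls > 0" using d d1 by (simp add: Ls_def)
    have nr: "real n > 0" "real N > 0" using n N by auto
    have w: "(b - a)\<^sup>2 > 0" using ab' by simp
    have rpos: "rho N n > 0"
    proof (cases "real n \<le> real N / 2")
      case True
      then show ?thesis using nN nr by (simp add: rho_def field_simps)
    next
      case False
      have "1 - real n / real N > 0" using nN nr by (simp add: field_simps)
      moreover have "1 + 1 / real n > 0" using nr by (simp add: add_pos_pos)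
      ultimately show ?thesis using False by (simp add: rho_def)
    qed
    have e2: "(real n * \<epsilon>)\<^sup>2 = (real n)\<^sup>2 * (b - a)\<^sup>2 * (rho N n * Ls / (2 * real n))"
      using rpos Ls nr by (simp add: \<epsilon>_def power_mult_distrib)
    have epos: "real n * \<epsilon> > 0" using rpos Ls nr ab' by (simp add: \<epsilon>_def)
    show ?thesis
    proof (cases "real n \<le> real N / 2")
      case True
      have c: "real (card Bn) \<le> fact N * exp (- (2 * (real n * \<epsilon>)\<^sup>2 * real N / ((b - a)\<^sup>2 * real n * (real N - real n + 1))))"
        using chernoff[OF finA _ _ ab' bnd epos, of n] n nN cardA by (simp add: Bn_def L_def)
      have "2 * (real n * \<epsilon>)\<^sup>2 * real N / ((b - a)\<^sup>2 * real n * (real N - real n + 1)) = Ls"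
      proof -
        have r: "rho N n = (real N - real n + 1) / real N" using True nr by (simp add: rho_def field_simps)
        have "real N - real n + 1 > 0" using nN by simp
        then show ?thesis unfolding e2 r by (rule al1[OF nr(1) nr(2) w])
      qed
      then show ?thesis using c expLs by (simp add: mult.commute)
    next
      case False
      define m where "m = N - n"
      have m: "1 \<le> m" "m < N" "real m = real N - real n" using nN n by (auto simp: m_def)
      have bnd': "\<forall>i\<in>A. - b \<le> - x i \<and> - x i \<le> - a" using bnd by auto
      have "Bn = {\<sigma>\<in>L. YA (\<lambda>i. - x i) A m (rev \<sigma>) > real n * \<epsilon>}"
        unfolding Bn_def m_def using rev_eq[OF _ _ finA Ane, of _ n x] n cardA
        by (auto simp: L_def)
      then have cB: "card Bn = card {\<sigma>\<in>L. YA (\<lambda>i. - x i) A m \<sigma> > real n * \<epsilon>}"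
        unfolding L_def
        by (simp only:) (rule card_filter_rev[where Q="\<lambda>\<tau>. real n * \<epsilon> < YA (\<lambda>i. - x i) A m \<tau>"])
      have c: "real (card Bn) \<le> fact N * exp (- (2 * (real n * \<epsilon>)\<^sup>2 * real N / ((- a - - b)\<^sup>2 * real m * (real N - real m + 1))))"
        unfolding cB using chernoff[OF finA _ _ _ bnd' epos, of m] m cardA ab' by (simp add: L_def)
      have "2 * (real n * \<epsilon>)\<^sup>2 * real N / ((- a - - b)\<^sup>2 * real m * (real N - real m + 1)) = Ls"
      proof -
        have r: "rho N n = (real N - real n) * (real n + 1) / (real N * real n)" using False nr by (simp add: rho_def field_simps)
        have "real N - real n > 0" using nN by simp
        moreover have sq: "(- a - - b)\<^sup>2 = (b - a)\<^sup>2" by (simp add: power2_commute)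
        moreover have dd: "real N - (real N - real n) + 1 = real n + 1" by simp
        ultimately show ?thesis unfolding e2 r m(3) sq dd
          by (intro al2[OF nr(1) nr(2) w]) (use nr in auto)
      qed
      then show ?thesis using c expLs by (simp add: mult.commute)
    qed
  qed
  have "1 - \<delta> \<le> (fact N - real (card Bn)) / fact N"
    using key by (simp add: field_simps)
  also have "(fact N - real (card Bn)) / fact N = measure_pmf.prob (unif_perm N) E"
  proof -
    have r1: "real (card P) = fact N" using cardP by simp
    have r2: "real (card P) = real (card (P \<inter> E)) + real (card Bn)" using split cPE by simp
    show ?thesis unfolding prob r1[symmetric] using r2 by simp
  qed
  finally show ?thesis by (simp add: E_def \<epsilon>_def Ls_def)
qed

end
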